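(* Consider a finite tabular MDP with a unique optimal policy $\pi^*$ and full reachability ($d_\rho^\pi(s)\ge d_{\min}>0$ for all states $s$ and all full-support policies $\pi$). For any temperature $\eta\in(0,\infty)$, the discrete DG update $\pi_{t+1}(a|s)=\pi_t(a|s)e^{\alpha w_t(s,a)U_t(s,a)}/Z^t_s$ with sufficiently small step size $\alpha>0$ satisfies $V(\pi_t)\to V^*$ and $\pi_t\to\pi^*$.
   Context: A finite MDP $(\mathcal S,\mathcal A,P,r,\gamma,\rho)$ with $r(s,a)\in[0,1]$, $\gamma\in[0,1)$; tabular softmax policies $\pi_\theta(a|s)=e^{\theta(s,a)}/\sum_{a'}e^{\theta(s,a')}$. $V^\pi,Q^\pi$ are discounted value functions, $V(\pi)=\mathbb{E}_{s\sim\rho}V^\pi(s)$, $V^*=V(\pi^* )$, $d_\rho^\pi(s)=(1-\gamma)\sum_{t\ge0}\gamma^t\Pr(s_t=s\mid\rho,\pi)$. $U_t(s,a):=Q^{\pi_t}(s,a)-V^{\pi_t}(s)$, $\ell_t(s,a):=-\log\pi_t(a|s)$, $w_t(s,a):=\sigma(U_t(s,a)\ell_t(s,a)/\eta)$ with $\sigma(x)=1/(1+e^{-x})$, and $Z^t_s:=\sum_{a'}\pi_t(a'|s)e^{\alpha w_t(s,a')U_t(s,a')}$. *)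

theory Defs
  imports "HOL-Analysis.Analysis"
begin

text \<open>Finite tabular MDP. States have type 's, actions type 'a (both finite).
  P s a s' = P(s'|s,a), r s a = reward, \<rho> = initial distribution.
  A policy is pi s a = pi(a|s).\<close>

definition is_mdp ::
  "('s::finite \<Rightarrow> 'a::finite \<Rightarrow> 's \<Rightarrow> real) \<Rightarrow> ('s \<Rightarrow> 'a \<Rightarrow> real) \<Rightarrow> real \<Rightarrow> ('s \<Rightarrow> real) \<Rightarrow> bool" where
  "is_mdp P r \<gamma> \<rho> \<longleftrightarrow>
     (\<forall>s a s'. 0 \<le> P s a s') \<and> (\<forall>s a. (\<Sum>s'\<in>UNIV. P s a s') = 1) \<and>
     (\<forall>s a. 0 \<le> r s a \<and> r s a \<le> 1) \<and> 0 \<le> \<gamma> \<and> \<gamma> < 1 \<and>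
     (\<forall>s. 0 \<le> \<rho> s) \<and> (\<Sum>s\<in>UNIV. \<rho> s) = 1"

definition is_policy :: "('s::finite \<Rightarrow> 'a::finite \<Rightarrow> real) \<Rightarrow> bool" where
  "is_policy \<pi> \<longleftrightarrow> (\<forall>s a. 0 \<le> \<pi> s a) \<and> (\<forall>s. (\<Sum>a\<in>UNIV. \<pi> s a) = 1)"

definition full_support :: "('s::finite \<Rightarrow> 'a::finite \<Rightarrow> real) \<Rightarrow> bool" where
  "full_support \<pi> \<longleftrightarrow> is_policy \<pi> \<and> (\<forall>s a. 0 < \<pi> s a)"

definition softmax :: "('s \<Rightarrow> 'a::finite \<Rightarrow> real) \<Rightarrow> 's \<Rightarrow> 'a \<Rightarrow> real" where
  "softmax \<theta> s a = exp (\<theta> s a) / (\<Sum>a'\<in>UNIV. exp (\<theta> s a'))"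

fun state_dist ::
  "('s::finite \<Rightarrow> 'a::finite \<Rightarrow> 's \<Rightarrow> real) \<Rightarrow> ('s \<Rightarrow> 'a \<Rightarrow> real) \<Rightarrow> ('s \<Rightarrow> real) \<Rightarrow> nat \<Rightarrow> 's \<Rightarrow> real" where
  "state_dist P \<pi> \<mu> 0 = \<mu>"
| "state_dist P \<pi> \<mu> (Suc t) =
     (\<lambda>s'. \<Sum>s\<in>UNIV. state_dist P \<pi> \<mu> t s * (\<Sum>a\<in>UNIV. \<pi> s a * P s a s'))"

definition Vf ::
  "('s::finite \<Rightarrow> 'a::finite \<Rightarrow> 's \<Rightarrow> real) \<Rightarrow> ('s \<Rightarrow> 'a \<Rightarrow> real) \<Rightarrow> real \<Rightarrow> ('s \<Rightarrow> 'a \<Rightarrow> real) \<Rightarrow> 's \<Rightarrow> real" where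
  "Vf P r \<gamma> \<pi> s = (\<Sum>t. \<gamma> ^ t * (\<Sum>s'\<in>UNIV.
       state_dist P \<pi> (\<lambda>x. if x = s then 1 else 0) t s' * (\<Sum>a\<in>UNIV. \<pi> s' a * r s' a)))"

definition Qf ::
  "('s::finite \<Rightarrow> 'a::finite \<Rightarrow> 's \<Rightarrow> real) \<Rightarrow> ('s \<Rightarrow> 'a \<Rightarrow> real) \<Rightarrow> real \<Rightarrow> ('s \<Rightarrow> 'a \<Rightarrow> real) \<Rightarrow> 's \<Rightarrow> 'a \<Rightarrow> real" where
  "Qf P r \<gamma> \<pi> s a = r s a + \<gamma> * (\<Sum>s'\<in>UNIV. P s a s' * Vf P r \<gamma> \<pi> s')"

definition Vrho ::
  "('s::finite \<Rightarrow> 'a::finite \<Rightarrow> 's \<Rightarrow> real) \<Rightarrow> ('s \<Rightarrow> 'a \<Rightarrow> real) \<Rightarrow> real \<Rightarrow> ('s \<Rightarrow> real) \<Rightarrow> ('s \<Rightarrow> 'a \<Rightarrow> real) \<Rightarrow> real" where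
  "Vrho P r \<gamma> \<rho> \<pi> = (\<Sum>s\<in>UNIV. \<rho> s * Vf P r \<gamma> \<pi> s)"

definition disc_visit ::
  "('s::finite \<Rightarrow> 'a::finite \<Rightarrow> 's \<Rightarrow> real) \<Rightarrow> real \<Rightarrow> ('s \<Rightarrow> real) \<Rightarrow> ('s \<Rightarrow> 'a \<Rightarrow> real) \<Rightarrow> 's \<Rightarrow> real" where
  "disc_visit P \<gamma> \<rho> \<pi> s = (1 - \<gamma>) * (\<Sum>t. \<gamma> ^ t * state_dist P \<pi> \<rho> t s)"

definition optimal_policy ::
  "('s::finite \<Rightarrow> 'a::finite \<Rightarrow> 's \<Rightarrow> real) \<Rightarrow> ('s \<Rightarrow> 'a \<Rightarrow> real) \<Rightarrow> real \<Rightarrow> ('s \<Rightarrow> 'a \<Rightarrow> real) \<Rightarrow> bool" where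
  "optimal_policy P r \<gamma> \<pi> \<longleftrightarrow> is_policy \<pi> \<and>
     (\<forall>\<pi>'. is_policy \<pi>' \<longrightarrow> (\<forall>s. Vf P r \<gamma> \<pi>' s \<le> Vf P r \<gamma> \<pi> s))"

definition sigmoid :: "real \<Rightarrow> real" where
  "sigmoid x = 1 / (1 + exp (- x))"

definition adv ::
  "('s::finite \<Rightarrow> 'a::finite \<Rightarrow> 's \<Rightarrow> real) \<Rightarrow> ('s \<Rightarrow> 'a \<Rightarrow> real) \<Rightarrow> real \<Rightarrow> ('s \<Rightarrow> 'a \<Rightarrow> real) \<Rightarrow> 's \<Rightarrow> 'a \<Rightarrow> real" where
  "adv P r \<gamma> \<pi> s a = Qf P r \<gamma> \<pi> s a - Vf P r \<gamma> \<pi> s"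

definition dg_weight ::
  "('s::finite \<Rightarrow> 'a::finite \<Rightarrow> 's \<Rightarrow> real) \<Rightarrow> ('s \<Rightarrow> 'a \<Rightarrow> real) \<Rightarrow> real \<Rightarrow> real \<Rightarrow> ('s \<Rightarrow> 'a \<Rightarrow> real) \<Rightarrow> 's \<Rightarrow> 'a \<Rightarrow> real" where
  "dg_weight P r \<gamma> \<eta> \<pi> s a = sigmoid (adv P r \<gamma> \<pi> s a * (- ln (\<pi> s a)) / \<eta>)"

definition dg_step ::
  "('s::finite \<Rightarrow> 'a::finite \<Rightarrow> 's \<Rightarrow> real) \<Rightarrow> ('s \<Rightarrow> 'a \<Rightarrow> real) \<Rightarrow> real \<Rightarrow> real \<Rightarrow> real \<Rightarrow> ('s \<Rightarrow> 'a \<Rightarrow> real) \<Rightarrow> 's \<Rightarrow> 'a \<Rightarrow> real" where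
  "dg_step P r \<gamma> \<eta> \<alpha> \<pi> s a =
     \<pi> s a * exp (\<alpha> * dg_weight P r \<gamma> \<eta> \<pi> s a * adv P r \<gamma> \<pi> s a) /
     (\<Sum>a'\<in>UNIV. \<pi> s a' * exp (\<alpha> * dg_weight P r \<gamma> \<eta> \<pi> s a' * adv P r \<gamma> \<pi> s a'))"

fun dg_iter ::
  "('s::finite \<Rightarrow> 'a::finite \<Rightarrow> 's \<Rightarrow> real) \<Rightarrow> ('s \<Rightarrow> 'a \<Rightarrow> real) \<Rightarrow> real \<Rightarrow> real \<Rightarrow> real \<Rightarrow> ('s \<Rightarrow> 'a \<Rightarrow> real) \<Rightarrow> nat \<Rightarrow> 's \<Rightarrow> 'a \<Rightarrow> real" where
  "dg_iter P r \<gamma> \<eta> \<alpha> \<theta>0 0 = softmax \<theta>0"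
| "dg_iter P r \<gamma> \<eta> \<alpha> \<theta>0 (Suc t) = dg_step P r \<gamma> \<eta> \<alpha> (dg_iter P r \<gamma> \<eta> \<alpha> \<theta>0 t)"

end

theory Submission
  imports Defs
begin

locale mdp_loc =
  fixes P :: "'s::finite \<Rightarrow> 'a::finite \<Rightarrow> 's \<Rightarrow> real" and r :: "'s \<Rightarrow> 'a \<Rightarrow> real" and \<gamma> :: real
  assumes P_nonneg: "\<And>s a s'. 0 \<le> P s a s'" and P_sum: "\<And>s a. (\<Sum>s'\<in>UNIV. P s a s') = 1"
    and r_nonneg: "\<And>s a. 0 \<le> r s a" and r_le1: "\<And>s a. r s a \<le> 1"
    and g_nonneg: "0 \<le> \<gamma>" and g_lt1: "\<gamma> < 1"
begin

definition Mt :: "('s \<Rightarrow> 'a \<Rightarrow> real) \<Rightarrow> 's \<Rightarrow> 's \<Rightarrow> real" where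
  "Mt \<pi> s s' = (\<Sum>a\<in>UNIV. \<pi> s a * P s a s')"

definition gval :: "('s \<Rightarrow> 'a \<Rightarrow> real) \<Rightarrow> ('s \<Rightarrow> real) \<Rightarrow> 's \<Rightarrow> real" where
  "gval \<pi> g s = (\<Sum>t. \<gamma> ^ t * (\<Sum>s'\<in>UNIV.
       state_dist P \<pi> (\<lambda>x. if x = s then 1 else 0) t s' * g s'))"

definition rv :: "('s \<Rightarrow> 'a \<Rightarrow> real) \<Rightarrow> 's \<Rightarrow> real" where
  "rv \<pi> s = (\<Sum>a\<in>UNIV. \<pi> s a * r s a)"

lemma Vf_gval: "Vf P r \<gamma> \<pi> s = gval \<pi> (rv \<pi>) s"
  unfolding Vf_def gval_def rv_def ..

lemma Mt_nonneg: "is_policy \<pi> \<Longrightarrow> 0 \<le> Mt \<pi> s s'"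
  unfolding Mt_def is_policy_def by (auto intro!: sum_nonneg simp: P_nonneg)

lemma Mt_sum: "is_policy \<pi> \<Longrightarrow> (\<Sum>s'\<in>UNIV. Mt \<pi> s s') = 1"
  unfolding Mt_def is_policy_def
  by (simp add: sum.swap[of _ UNIV UNIV] sum_distrib_left[symmetric] P_sum)

lemma sd_Suc: "state_dist P \<pi> \<mu> (Suc t) s' = (\<Sum>s\<in>UNIV. state_dist P \<pi> \<mu> t s * Mt \<pi> s s')"
  by (simp add: Mt_def)

lemma sd_nonneg: "is_policy \<pi> \<Longrightarrow> (\<And>s. 0 \<le> \<mu> s) \<Longrightarrow> 0 \<le> state_dist P \<pi> \<mu> t s"
  proof (induction t arbitrary: s)
  case 0 then show ?case by simp
next
  case (Suc t) then show ?case
    by (simp only: sd_Suc) (auto intro!: sum_nonneg mult_nonneg_nonneg Mt_nonneg)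
qed

lemma sd_sum: "is_policy \<pi> \<Longrightarrow> (\<Sum>s\<in>UNIV. state_dist P \<pi> \<mu> t s) = (\<Sum>s\<in>UNIV. \<mu> s)"
proof (induction t)
  case 0 then show ?case by simp
next
  case (Suc t)
  have "(\<Sum>s'\<in>UNIV. state_dist P \<pi> \<mu> (Suc t) s') = (\<Sum>s\<in>UNIV. state_dist P \<pi> \<mu> t s * (\<Sum>s'\<in>UNIV. Mt \<pi> s s'))"
    by (simp only: sd_Suc sum_distrib_left mult.assoc) (rule sum.swap)
  also have "\<dots> = (\<Sum>s\<in>UNIV. state_dist P \<pi> \<mu> t s)" using Suc.prems by (simp add: Mt_sum)
  finally show ?case using Suc by simp
qed

lemma sd_le1: "is_policy \<pi> \<Longrightarrow> (\<And>s. 0 \<le> \<mu> s) \<Longrightarrow> (\<Sum>s\<in>UNIV. \<mu> s) = 1 \<Longrightarrow> state_dist P \<pi> \<mu> t s \<le> 1"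
  using member_le_sum[of s UNIV "state_dist P \<pi> \<mu> t"] sd_nonneg sd_sum by fastforce

lemma sd_shift: "state_dist P \<pi> \<mu> (Suc t) s' = state_dist P \<pi> (\<lambda>x. \<Sum>s\<in>UNIV. \<mu> s * Mt \<pi> s x) t s'"
proof (induction t arbitrary: s')
  case 0 then show ?case by (simp only: sd_Suc state_dist.simps(1))
next
  case (Suc t)
  show ?case by (subst sd_Suc, subst (2) sd_Suc, simp only: Suc)
qed

lemma sd_linear: "state_dist P \<pi> \<mu> t s' = (\<Sum>s\<in>UNIV. \<mu> s * state_dist P \<pi> (\<lambda>x. if x = s then 1 else 0) t s')"
proof (induction t arbitrary: s')
  case 0 then show ?case by (simp add: if_distrib cong: if_cong)
next
  case (Suc t)
  have "state_dist P \<pi> \<mu> (Suc t) s' = (\<Sum>x\<in>UNIV. (\<Sum>s\<in>UNIV. \<mu> s * state_dist P \<pi> (\<lambda>x. if x = s then 1 else 0) t x) * Mt \<pi> x s')"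
    by (simp only: sd_Suc Suc)
  also have "\<dots> = (\<Sum>s\<in>UNIV. \<mu> s * (\<Sum>x\<in>UNIV. state_dist P \<pi> (\<lambda>x. if x = s then 1 else 0) t x * Mt \<pi> x s'))"
    by (simp only: sum_distrib_left sum_distrib_right mult.assoc) (rule sum.swap)
  also have "\<dots> = (\<Sum>s\<in>UNIV. \<mu> s * state_dist P \<pi> (\<lambda>x. if x = s then 1 else 0) (Suc t) s')"
    by (simp only: sd_Suc)
  finally show ?case .
qed

lemma delta_sum: "(\<Sum>y\<in>UNIV. (if y = (s::'s) then 1 else 0) * (h y::real)) = h s"
proof -
  have "(\<lambda>y. (if y = s then 1 else 0) * h y) = (\<lambda>y. if y = s then h y else 0)" by auto
  thus ?thesis unfolding \<open>(\<lambda>y. (if y = s then 1 else 0) * h y) = (\<lambda>y. if y = s then h y else 0)\<close> by simp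
qed

lemma delta_Mt: "(\<lambda>x. \<Sum>y\<in>UNIV. (if y = s then 1 else 0) * Mt \<pi> y x) = Mt \<pi> s"
  by (simp only: delta_sum)

lemma gterm_bound:
  assumes "is_policy \<pi>"
  shows "\<bar>\<Sum>s'\<in>UNIV. state_dist P \<pi> (\<lambda>x. if x = s then 1 else 0) t s' * g s'\<bar> \<le> (\<Sum>s'\<in>UNIV. \<bar>g s'\<bar>)"
proof -
  have "\<bar>\<Sum>s'\<in>UNIV. state_dist P \<pi> (\<lambda>x. if x = s then 1 else 0) t s' * g s'\<bar>
      \<le> (\<Sum>s'\<in>UNIV. \<bar>state_dist P \<pi> (\<lambda>x. if x = s then 1 else 0) t s' * g s'\<bar>)" by (rule sum_abs)
  also have "\<dots> \<le> (\<Sum>s'\<in>UNIV. \<bar>g s'\<bar>)"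
  proof (rule sum_mono)
    fix s'
    have "0 \<le> state_dist P \<pi> (\<lambda>x. if x = s then 1 else 0) t s'" by (rule sd_nonneg[OF assms]) simp
    moreover have "state_dist P \<pi> (\<lambda>x. if x = s then 1 else 0) t s' \<le> 1" by (rule sd_le1[OF assms]) auto
    ultimately show "\<bar>state_dist P \<pi> (\<lambda>x. if x = s then 1 else 0) t s' * g s'\<bar> \<le> \<bar>g s'\<bar>"
      by (simp add: abs_mult mult_left_le_one_le)
  qed
  finally show ?thesis .
qed

lemma gval_summable:
  assumes "is_policy \<pi>"
  shows "summable (\<lambda>t. \<gamma> ^ t * (\<Sum>s'\<in>UNIV. state_dist P \<pi> (\<lambda>x. if x = s then 1 else 0) t s' * g s'))"
proof (rule summable_comparison_test)
  show "\<exists>N. \<forall>n\<ge>N. norm (\<gamma> ^ n * (\<Sum>s'\<in>UNIV. state_dist P \<pi> (\<lambda>x. if x = s then 1 else 0) n s' * g s')) \<le> \<gamma> ^ n * (\<Sum>s'\<in>UNIV. \<bar>g s'\<bar>)"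
  proof (intro exI allI impI)
    fix n :: nat
    have "norm (\<gamma> ^ n * (\<Sum>s'\<in>UNIV. state_dist P \<pi> (\<lambda>x. if x = s then 1 else 0) n s' * g s'))
       = \<gamma> ^ n * \<bar>\<Sum>s'\<in>UNIV. state_dist P \<pi> (\<lambda>x. if x = s then 1 else 0) n s' * g s'\<bar>"
      using g_nonneg by (simp add: abs_mult)
    also have "\<dots> \<le> \<gamma> ^ n * (\<Sum>s'\<in>UNIV. \<bar>g s'\<bar>)"
      by (rule mult_left_mono[OF gterm_bound[OF assms]]) (simp add: g_nonneg)
    finally show "norm (\<gamma> ^ n * (\<Sum>s'\<in>UNIV. state_dist P \<pi> (\<lambda>x. if x = s then 1 else 0) n s' * g s')) \<le> \<gamma> ^ n * (\<Sum>s'\<in>UNIV. \<bar>g s'\<bar>)" .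
  qed
  show "summable (\<lambda>n. \<gamma> ^ n * (\<Sum>s'\<in>UNIV. \<bar>g s'\<bar>))"
    using g_nonneg g_lt1 by (intro summable_mult2 summable_geometric) auto
qed

lemma gval_sums:
  assumes "is_policy \<pi>"
  shows "(\<lambda>t. \<gamma> ^ t * (\<Sum>s'\<in>UNIV. state_dist P \<pi> (\<lambda>x. if x = s then 1 else 0) t s' * g s')) sums gval \<pi> g s"
  unfolding gval_def using gval_summable[OF assms] by (rule summable_sums)

lemma gval_bellman:
  assumes pol: "is_policy \<pi>"
  shows "gval \<pi> g s = g s + \<gamma> * (\<Sum>s1\<in>UNIV. Mt \<pi> s s1 * gval \<pi> g s1)"
proof -
  define y where "y s t = (\<Sum>s'\<in>UNIV. state_dist P \<pi> (\<lambda>x. if x = s then 1 else 0) t s' * g s')" for s t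
  define f where "f s t = \<gamma> ^ t * y s t" for s t
  have fS: "f s (Suc t) = \<gamma> * (\<Sum>s1\<in>UNIV. Mt \<pi> s s1 * f s1 t)" for t
  proof -
    have "y s (Suc t)
        = (\<Sum>s'\<in>UNIV. (\<Sum>s1\<in>UNIV. Mt \<pi> s s1 * state_dist P \<pi> (\<lambda>x. if x = s1 then 1 else 0) t s') * g s')"
      unfolding y_def by (simp only: sd_shift delta_Mt, subst sd_linear[of _ "Mt \<pi> s"], rule refl)
    also have "\<dots> = (\<Sum>s1\<in>UNIV. Mt \<pi> s s1 * y s1 t)"
      unfolding y_def by (simp only: sum_distrib_left sum_distrib_right mult.assoc) (rule sum.swap)
    finally have X: "y s (Suc t) = (\<Sum>s1\<in>UNIV. Mt \<pi> s s1 * y s1 t)" .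
    have "f s (Suc t) = \<gamma> * (\<gamma> ^ t * (\<Sum>s1\<in>UNIV. Mt \<pi> s s1 * y s1 t))"
      unfolding f_def X by simp
    also have "\<gamma> ^ t * (\<Sum>s1\<in>UNIV. Mt \<pi> s s1 * y s1 t) = (\<Sum>s1\<in>UNIV. Mt \<pi> s s1 * f s1 t)"
      unfolding f_def by (subst sum_distrib_left) (simp only: mult.left_commute)
    finally show ?thesis .
  qed
  have s1: "f s1 sums gval \<pi> g s1" for s1 unfolding f_def y_def by (rule gval_sums[OF pol])
  have "(\<lambda>t. \<gamma> * (\<Sum>s1\<in>UNIV. Mt \<pi> s s1 * f s1 t)) sums (\<gamma> * (\<Sum>s1\<in>UNIV. Mt \<pi> s s1 * gval \<pi> g s1))"
    by (intro sums_mult sums_sum) (rule s1)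
  hence "(\<lambda>t. f s (Suc t)) sums (\<gamma> * (\<Sum>s1\<in>UNIV. Mt \<pi> s s1 * gval \<pi> g s1))" by (simp only: fS)
  hence "f s sums (\<gamma> * (\<Sum>s1\<in>UNIV. Mt \<pi> s s1 * gval \<pi> g s1) + f s 0)" by (simp only: sums_Suc_iff)
  moreover have "f s 0 = g s" unfolding f_def y_def using delta_sum[of s g] by (simp add: mult.commute)
  ultimately show ?thesis using sums_unique2[OF s1] by simp
qed

lemma max_principle:
  assumes pol: "is_policy \<pi>" and D: "\<And>s. D s \<le> \<gamma> * (\<Sum>s1\<in>UNIV. Mt \<pi> s s1 * D s1)"
  shows "D s \<le> 0"
proof -
  have "Max (range D) \<in> range D" by (rule Max_in) auto
  then obtain s0 where s0: "D s0 = Max (range D)" by (metis rangeE)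
  have ge: "D x \<le> D s0" for x using s0 by simp
  have "(\<Sum>s1\<in>UNIV. Mt \<pi> s0 s1 * D s1) \<le> (\<Sum>s1\<in>UNIV. Mt \<pi> s0 s1 * D s0)"
    by (intro sum_mono mult_left_mono ge Mt_nonneg pol)
  also have "\<dots> = D s0" by (simp add: sum_distrib_right[symmetric] Mt_sum pol)
  finally have "D s0 \<le> \<gamma> * D s0" using D[of s0] g_nonneg by (meson mult_left_mono order_trans)
  hence "(1 - \<gamma>) * D s0 \<le> 0" by (simp add: algebra_simps)
  hence "D s0 \<le> 0" using g_lt1 by (simp add: mult_le_0_iff)
  thus ?thesis using ge[of s] by simp
qed

lemma gval_sub:
  assumes pol: "is_policy \<pi>" and W: "\<And>s. W s \<le> g s + \<gamma> * (\<Sum>s1\<in>UNIV. Mt \<pi> s s1 * W s1)"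
  shows "W s \<le> gval \<pi> g s"
proof -
  have "W s - gval \<pi> g s \<le> 0"
  proof (rule max_principle[OF pol])
    fix s
    have "W s - gval \<pi> g s \<le> \<gamma> * (\<Sum>s1\<in>UNIV. Mt \<pi> s s1 * W s1) - \<gamma> * (\<Sum>s1\<in>UNIV. Mt \<pi> s s1 * gval \<pi> g s1)"
      using W[of s] gval_bellman[OF pol, of g s] by linarith
    also have "\<dots> = \<gamma> * (\<Sum>s1\<in>UNIV. Mt \<pi> s s1 * (W s1 - gval \<pi> g s1))"
      by (simp add: right_diff_distrib sum_subtractf)
    finally show "W s - gval \<pi> g s \<le> \<gamma> * (\<Sum>s1\<in>UNIV. Mt \<pi> s s1 * (W s1 - gval \<pi> g s1))" .
  qed
  thus ?thesis by simp
qed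

lemma gval_super:
  assumes pol: "is_policy \<pi>" and W: "\<And>s. g s + \<gamma> * (\<Sum>s1\<in>UNIV. Mt \<pi> s s1 * W s1) \<le> W s"
  shows "gval \<pi> g s \<le> W s"
proof -
  have "gval \<pi> g s - W s \<le> 0"
  proof (rule max_principle[OF pol])
    fix s
    have "gval \<pi> g s - W s \<le> \<gamma> * (\<Sum>s1\<in>UNIV. Mt \<pi> s s1 * gval \<pi> g s1) - \<gamma> * (\<Sum>s1\<in>UNIV. Mt \<pi> s s1 * W s1)"
      using W[of s] gval_bellman[OF pol, of g s] by linarith
    also have "\<dots> = \<gamma> * (\<Sum>s1\<in>UNIV. Mt \<pi> s s1 * (gval \<pi> g s1 - W s1))"
      by (simp add: right_diff_distrib sum_subtractf)
    finally show "gval \<pi> g s - W s \<le> \<gamma> * (\<Sum>s1\<in>UNIV. Mt \<pi> s s1 * (gval \<pi> g s1 - W s1))" .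
  qed
  thus ?thesis by simp
qed

lemma gval_unique:
  assumes pol: "is_policy \<pi>" and W: "\<And>s. W s = g s + \<gamma> * (\<Sum>s1\<in>UNIV. Mt \<pi> s s1 * W s1)"
  shows "W s = gval \<pi> g s"
proof -
  have "W s \<le> gval \<pi> g s" by (rule gval_sub[OF pol]) (metis W order_refl)
  moreover have "gval \<pi> g s \<le> W s" by (rule gval_super[OF pol]) (metis W order_refl)
  ultimately show ?thesis by linarith
qed

definition K :: real where "K = 1 / (1 - \<gamma>)"

lemma K_pos: "0 < K" using g_lt1 by (simp add: K_def)
lemma K_eq: "1 + \<gamma> * K = K" using g_lt1 by (simp add: K_def field_simps)

lemma rv_bounds: "is_policy \<pi> \<Longrightarrow> 0 \<le> rv \<pi> s \<and> rv \<pi> s \<le> 1"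
proof -
  assume pol: "is_policy \<pi>"
  have "0 \<le> rv \<pi> s" unfolding rv_def using pol r_nonneg by (auto simp: is_policy_def intro!: sum_nonneg)
  moreover have "rv \<pi> s \<le> (\<Sum>a\<in>UNIV. \<pi> s a * 1)" unfolding rv_def
    using pol r_le1 by (intro sum_mono mult_left_mono) (auto simp: is_policy_def)
  moreover have "(\<Sum>a\<in>UNIV. \<pi> s a * 1) = 1" using pol by (simp add: is_policy_def)
  ultimately show ?thesis by linarith
qed

lemma Qf_sum: "(\<Sum>a\<in>UNIV. \<pi> s a * Qf P r \<gamma> \<pi>0 s a) = rv \<pi> s + \<gamma> * (\<Sum>s1\<in>UNIV. Mt \<pi> s s1 * Vf P r \<gamma> \<pi>0 s1)"
proof -
  have A: "(\<Sum>a\<in>UNIV. \<pi> s a * Qf P r \<gamma> \<pi>0 s a) = (\<Sum>a\<in>UNIV. \<pi> s a * r s a) + \<gamma> * (\<Sum>a\<in>UNIV. \<pi> s a * (\<Sum>s1\<in>UNIV. P s a s1 * Vf P r \<gamma> \<pi>0 s1))"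
    unfolding Qf_def by (simp add: distrib_left sum.distrib sum_distrib_left mult.left_commute)
  have B: "(\<Sum>a\<in>UNIV. \<pi> s a * (\<Sum>s1\<in>UNIV. P s a s1 * Vf P r \<gamma> \<pi>0 s1)) = (\<Sum>s1\<in>UNIV. Mt \<pi> s s1 * Vf P r \<gamma> \<pi>0 s1)"
    unfolding Mt_def by (simp only: sum_distrib_left sum_distrib_right mult.assoc) (rule sum.swap)
  show ?thesis unfolding A B rv_def ..
qed

lemma Vf_bellman: "is_policy \<pi> \<Longrightarrow> Vf P r \<gamma> \<pi> s = rv \<pi> s + \<gamma> * (\<Sum>s1\<in>UNIV. Mt \<pi> s s1 * Vf P r \<gamma> \<pi> s1)"
  unfolding Vf_gval by (rule gval_bellman)

lemma Vf_Q: "is_policy \<pi> \<Longrightarrow> Vf P r \<gamma> \<pi> s = (\<Sum>a\<in>UNIV. \<pi> s a * Qf P r \<gamma> \<pi> s a)"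
  using Vf_bellman Qf_sum by simp

lemma adv_sum: "is_policy \<pi> \<Longrightarrow> (\<Sum>a\<in>UNIV. \<pi> s a * adv P r \<gamma> \<pi> s a) = 0"
proof -
  assume pol: "is_policy \<pi>"
  have "(\<Sum>a\<in>UNIV. \<pi> s a * adv P r \<gamma> \<pi> s a) = (\<Sum>a\<in>UNIV. \<pi> s a * Qf P r \<gamma> \<pi> s a) - (\<Sum>a\<in>UNIV. \<pi> s a) * Vf P r \<gamma> \<pi> s"
    unfolding adv_def by (simp add: right_diff_distrib sum_subtractf sum_distrib_right)
  also have "\<dots> = 0" using pol Vf_Q[OF pol, of s] by (simp add: is_policy_def)
  finally show ?thesis .
qed

lemma Vf_bounds: "is_policy \<pi> \<Longrightarrow> 0 \<le> Vf P r \<gamma> \<pi> s \<and> Vf P r \<gamma> \<pi> s \<le> K"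
proof -
  assume pol: "is_policy \<pi>"
  have "(\<lambda>_. 0) s \<le> gval \<pi> (rv \<pi>) s"
    by (rule gval_sub[OF pol]) (use rv_bounds[OF pol] in simp)
  moreover have "gval \<pi> (rv \<pi>) s \<le> (\<lambda>_. K) s"
  proof (rule gval_super[OF pol])
    fix s
    have "rv \<pi> s + \<gamma> * (\<Sum>s1\<in>UNIV. Mt \<pi> s s1 * K) = rv \<pi> s + \<gamma> * K"
      by (simp add: sum_distrib_right[symmetric] Mt_sum pol)
    also have "\<dots> \<le> K" using rv_bounds[OF pol, of s] K_eq by linarith
    finally show "rv \<pi> s + \<gamma> * (\<Sum>s1\<in>UNIV. Mt \<pi> s s1 * K) \<le> K" .
  qed
  ultimately show ?thesis by (simp add: Vf_gval)
qed

lemma Qf_bounds: "is_policy \<pi> \<Longrightarrow> 0 \<le> Qf P r \<gamma> \<pi> s a \<and> Qf P r \<gamma> \<pi> s a \<le> K"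
proof -
  assume pol: "is_policy \<pi>"
  have "0 \<le> (\<Sum>s1\<in>UNIV. P s a s1 * Vf P r \<gamma> \<pi> s1)"
    using Vf_bounds[OF pol] P_nonneg by (auto intro!: sum_nonneg)
  moreover have "(\<Sum>s1\<in>UNIV. P s a s1 * Vf P r \<gamma> \<pi> s1) \<le> (\<Sum>s1\<in>UNIV. P s a s1 * K)"
    using Vf_bounds[OF pol] P_nonneg by (auto intro!: sum_mono mult_left_mono)
  moreover have "(\<Sum>s1\<in>UNIV. P s a s1 * K) = K" by (simp add: sum_distrib_right[symmetric] P_sum)
  ultimately have "0 \<le> \<gamma> * (\<Sum>s1\<in>UNIV. P s a s1 * Vf P r \<gamma> \<pi> s1) \<and> \<gamma> * (\<Sum>s1\<in>UNIV. P s a s1 * Vf P r \<gamma> \<pi> s1) \<le> \<gamma> * K"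
    using g_nonneg by (simp add: mult_left_mono)
  thus ?thesis unfolding Qf_def using r_nonneg[of s a] r_le1[of s a] K_eq by linarith
qed

lemma adv_abs: "is_policy \<pi> \<Longrightarrow> \<bar>adv P r \<gamma> \<pi> s a\<bar> \<le> K"
  using Qf_bounds[of \<pi> s a] Vf_bounds[of \<pi> s] unfolding adv_def by linarith

lemma gval_rho:
  assumes pol: "is_policy \<pi>" and rho0: "\<And>s. 0 \<le> \<rho> s" and rho1: "(\<Sum>s\<in>UNIV. \<rho> s) = 1"
  shows "(\<Sum>s\<in>UNIV. \<rho> s * gval \<pi> g s) = (\<Sum>s\<in>UNIV. disc_visit P \<gamma> \<rho> \<pi> s * g s) / (1 - \<gamma>)"
proof -
  define y where "y s t = (\<Sum>s'\<in>UNIV. state_dist P \<pi> (\<lambda>x. if x = s then 1 else 0) t s' * g s')" for s t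
  have 1: "(\<lambda>t. \<Sum>s\<in>UNIV. \<rho> s * (\<gamma> ^ t * y s t)) sums (\<Sum>s\<in>UNIV. \<rho> s * gval \<pi> g s)"
    unfolding y_def by (intro sums_sum sums_mult gval_sums pol)
  have 2: "(\<Sum>s\<in>UNIV. \<rho> s * (\<gamma> ^ t * y s t)) = (\<Sum>s'\<in>UNIV. g s' * (\<gamma> ^ t * state_dist P \<pi> \<rho> t s'))" for t
  proof -
    have "(\<Sum>s\<in>UNIV. \<rho> s * (\<gamma> ^ t * y s t)) = \<gamma> ^ t * (\<Sum>s\<in>UNIV. \<Sum>s'\<in>UNIV. \<rho> s * state_dist P \<pi> (\<lambda>x. if x = s then 1 else 0) t s' * g s')"
      unfolding y_def by (simp add: sum_distrib_left mult.assoc mult.left_commute)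
    also have "(\<Sum>s\<in>UNIV. \<Sum>s'\<in>UNIV. \<rho> s * state_dist P \<pi> (\<lambda>x. if x = s then 1 else 0) t s' * g s')
       = (\<Sum>s'\<in>UNIV. (\<Sum>s\<in>UNIV. \<rho> s * state_dist P \<pi> (\<lambda>x. if x = s then 1 else 0) t s') * g s')"
      by (subst sum.swap) (simp only: sum_distrib_right)
    also have "\<dots> = (\<Sum>s'\<in>UNIV. state_dist P \<pi> \<rho> t s' * g s')"
      by (rule sum.cong[OF refl], subst (2) sd_linear, rule refl)
    finally show ?thesis by (simp add: sum_distrib_left mult_ac)
  qed
  define S where "S s' = (\<Sum>t. \<gamma> ^ t * state_dist P \<pi> \<rho> t s')" for s'
  have 3: "(\<lambda>t. \<gamma> ^ t * state_dist P \<pi> \<rho> t s') sums S s'" for s'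
    unfolding S_def
  proof (rule summable_sums, rule summable_comparison_test)
    show "\<exists>N. \<forall>n\<ge>N. norm (\<gamma> ^ n * state_dist P \<pi> \<rho> n s') \<le> \<gamma> ^ n"
    proof (intro exI allI impI)
      fix n :: nat
      have "0 \<le> state_dist P \<pi> \<rho> n s'" by (rule sd_nonneg[OF pol rho0])
      moreover have "state_dist P \<pi> \<rho> n s' \<le> 1" by (rule sd_le1[OF pol rho0 rho1])
      ultimately show "norm (\<gamma> ^ n * state_dist P \<pi> \<rho> n s') \<le> \<gamma> ^ n"
        using g_nonneg by (simp add: abs_mult mult_left_le)
    qed
    show "summable (\<lambda>n. \<gamma> ^ n)" using g_nonneg g_lt1 by (intro summable_geometric) auto
  qed
  have "(\<lambda>t. \<Sum>s'\<in>UNIV. g s' * (\<gamma> ^ t * state_dist P \<pi> \<rho> t s')) sums (\<Sum>s'\<in>UNIV. g s' * S s')"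
    by (intro sums_sum sums_mult 3)
  hence "(\<Sum>s\<in>UNIV. \<rho> s * gval \<pi> g s) = (\<Sum>s'\<in>UNIV. g s' * S s')"
    using 1 unfolding 2 by (simp add: sums_unique2)
  also have "\<dots> = (\<Sum>s\<in>UNIV. disc_visit P \<gamma> \<rho> \<pi> s * g s) / (1 - \<gamma>)"
    using g_lt1 unfolding disc_visit_def S_def by (simp add: sum_divide_distrib mult_ac)
  finally show ?thesis .
qed

end

lemma sig_pos: "0 < sigmoid x" unfolding sigmoid_def by (simp add: add_pos_pos)
lemma sig_lt1: "sigmoid x < 1"
proof -
  have p: "0 < 1 + exp (- x)" by (simp add: add_pos_pos)
  have "1 < 1 + exp (- x)" by simp
  thus ?thesis unfolding sigmoid_def using divide_less_eq_1_pos[OF p] by simp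
qed
lemma sig_half: "0 \<le> x \<Longrightarrow> 1/2 \<le> sigmoid x"
proof -
  assume "0 \<le> x"
  hence e: "exp (- x) \<le> 1" by simp
  have p: "0 < 1 + exp (- x)" by (simp add: add_pos_pos)
  show ?thesis unfolding sigmoid_def using e p by (simp add: field_simps)
qed
lemma sig_mono: "x \<le> y \<Longrightarrow> sigmoid x \<le> sigmoid y"
  unfolding sigmoid_def by (intro divide_left_mono add_pos_pos mult_pos_pos) (auto intro: add_pos_pos)

lemma softmax_full: "full_support (softmax (\<theta> :: 's::finite \<Rightarrow> 'a::finite \<Rightarrow> real))"
proof -
  have p: "0 < (\<Sum>a'\<in>UNIV. exp (\<theta> s a'))" for s by (rule sum_pos) auto
  have "0 < softmax \<theta> s a" for s a unfolding softmax_def using p[of s] by simp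
  moreover have "(\<Sum>a\<in>UNIV. softmax \<theta> s a) = 1" for s
    unfolding softmax_def using p[of s] by (simp add: sum_divide_distrib[symmetric])
  ultimately show ?thesis unfolding full_support_def is_policy_def by (auto simp: less_imp_le)
qed

locale dg_loc = mdp_loc P r \<gamma> for P :: "'s::finite \<Rightarrow> 'a::finite \<Rightarrow> 's \<Rightarrow> real" and r \<gamma> +
  fixes \<eta> \<alpha> :: real
  assumes eta_pos: "0 < \<eta>" and alpha_pos: "0 < \<alpha>"
begin

definition E :: "('s \<Rightarrow> 'a \<Rightarrow> real) \<Rightarrow> 's \<Rightarrow> 'a \<Rightarrow> real" where
  "E \<pi> s a = exp (\<alpha> * dg_weight P r \<gamma> \<eta> \<pi> s a * adv P r \<gamma> \<pi> s a)"

definition Z :: "('s \<Rightarrow> 'a \<Rightarrow> real) \<Rightarrow> 's \<Rightarrow> real" where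
  "Z \<pi> s = (\<Sum>a\<in>UNIV. \<pi> s a * E \<pi> s a)"

definition G :: "('s \<Rightarrow> 'a \<Rightarrow> real) \<Rightarrow> 's \<Rightarrow> real" where
  "G \<pi> s = (\<Sum>a\<in>UNIV. dg_step P r \<gamma> \<eta> \<alpha> \<pi> s a * adv P r \<gamma> \<pi> s a)"

lemma step_eq: "dg_step P r \<gamma> \<eta> \<alpha> \<pi> s a = \<pi> s a * E \<pi> s a / Z \<pi> s"
  unfolding dg_step_def E_def Z_def ..

lemma w_pos: "0 < dg_weight P r \<gamma> \<eta> \<pi> s a" unfolding dg_weight_def by (rule sig_pos)
lemma w_lt1: "dg_weight P r \<gamma> \<eta> \<pi> s a < 1" unfolding dg_weight_def by (rule sig_lt1)

lemma wU_le: "dg_weight P r \<gamma> \<eta> \<pi> s a * adv P r \<gamma> \<pi> s a \<le> \<bar>adv P r \<gamma> \<pi> s a\<bar>"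
proof (cases "0 \<le> adv P r \<gamma> \<pi> s a")
  case True thus ?thesis using w_lt1[of \<pi> s a] by (simp add: mult_left_le_one_le w_pos less_imp_le)
next
  case False thus ?thesis using w_pos[of \<pi> s a] mult_pos_neg[of "dg_weight P r \<gamma> \<eta> \<pi> s a" "adv P r \<gamma> \<pi> s a"] by simp
qed

lemma E_pos: "0 < E \<pi> s a" unfolding E_def by simp

lemma E_le: "is_policy \<pi> \<Longrightarrow> E \<pi> s a \<le> exp (\<alpha> * K)"
  unfolding E_def using wU_le[of \<pi> s a] adv_abs[of \<pi> s a] alpha_pos
  by (simp add: mult.assoc mult_left_mono)

lemma E_sign: "0 \<le> (E \<pi> s a - 1) * adv P r \<gamma> \<pi> s a"
proof (cases "0 \<le> adv P r \<gamma> \<pi> s a")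
  case True
  hence "0 \<le> \<alpha> * dg_weight P r \<gamma> \<eta> \<pi> s a * adv P r \<gamma> \<pi> s a"
    using alpha_pos w_pos[of \<pi> s a] by simp
  hence "1 \<le> E \<pi> s a" unfolding E_def by simp
  thus ?thesis using True by simp
next
  case False
  hence "\<alpha> * dg_weight P r \<gamma> \<eta> \<pi> s a * adv P r \<gamma> \<pi> s a \<le> 0"
    using alpha_pos w_pos[of \<pi> s a] by (intro mult_nonneg_nonpos) auto
  hence "E \<pi> s a \<le> 1" unfolding E_def by simp
  thus ?thesis using False by (simp add: mult_nonpos_nonpos)
qed

lemma Z_pos: "full_support \<pi> \<Longrightarrow> 0 < Z \<pi> s"
  unfolding Z_def full_support_def by (intro sum_pos) (auto intro: E_pos mult_pos_pos)

lemma Z_le: "full_support \<pi> \<Longrightarrow> Z \<pi> s \<le> exp (\<alpha> * K)"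
proof -
  assume fs: "full_support \<pi>"
  hence pol: "is_policy \<pi>" by (simp add: full_support_def)
  have "Z \<pi> s \<le> (\<Sum>a\<in>UNIV. \<pi> s a * exp (\<alpha> * K))"
    unfolding Z_def using pol by (intro sum_mono mult_left_mono E_le) (auto simp: is_policy_def)
  also have "\<dots> = exp (\<alpha> * K)" using pol by (simp add: sum_distrib_right[symmetric] is_policy_def)
  finally show ?thesis .
qed

lemma step_full: "full_support \<pi> \<Longrightarrow> full_support (dg_step P r \<gamma> \<eta> \<alpha> \<pi>)"
proof -
  assume fs: "full_support \<pi>"
  have pos: "0 < dg_step P r \<gamma> \<eta> \<alpha> \<pi> s a" for s a
    unfolding step_eq using fs Z_pos[OF fs] E_pos by (simp add: full_support_def)
  have "(\<Sum>a\<in>UNIV. dg_step P r \<gamma> \<eta> \<alpha> \<pi> s a) = 1" for s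
    unfolding step_eq using Z_pos[OF fs, of s] by (simp add: sum_divide_distrib[symmetric] Z_def)
  thus ?thesis using pos by (auto simp: full_support_def is_policy_def less_imp_le)
qed

lemma G_eq: "full_support \<pi> \<Longrightarrow> G \<pi> s = (\<Sum>a\<in>UNIV. \<pi> s a * ((E \<pi> s a - 1) * adv P r \<gamma> \<pi> s a)) / Z \<pi> s"
proof -
  assume fs: "full_support \<pi>"
  hence pol: "is_policy \<pi>" by (simp add: full_support_def)
  have "G \<pi> s = (\<Sum>a\<in>UNIV. \<pi> s a * E \<pi> s a * adv P r \<gamma> \<pi> s a) / Z \<pi> s"
    unfolding G_def step_eq by (simp add: sum_divide_distrib)
  also have "(\<Sum>a\<in>UNIV. \<pi> s a * E \<pi> s a * adv P r \<gamma> \<pi> s a)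
      = (\<Sum>a\<in>UNIV. \<pi> s a * ((E \<pi> s a - 1) * adv P r \<gamma> \<pi> s a)) + (\<Sum>a\<in>UNIV. \<pi> s a * adv P r \<gamma> \<pi> s a)"
    by (simp add: sum.distrib[symmetric] algebra_simps)
  also have "(\<Sum>a\<in>UNIV. \<pi> s a * adv P r \<gamma> \<pi> s a) = 0" by (rule adv_sum[OF pol])
  finally show ?thesis by simp
qed

lemma G_nonneg: "full_support \<pi> \<Longrightarrow> 0 \<le> G \<pi> s"
  using Z_pos[of \<pi> s] E_sign
  by (simp add: G_eq full_support_def less_imp_le sum_nonneg)

lemma step_Q: "full_support \<pi> \<Longrightarrow>
   rv (dg_step P r \<gamma> \<eta> \<alpha> \<pi>) s + \<gamma> * (\<Sum>s1\<in>UNIV. Mt (dg_step P r \<gamma> \<eta> \<alpha> \<pi>) s s1 * Vf P r \<gamma> \<pi> s1)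
     = G \<pi> s + Vf P r \<gamma> \<pi> s"
proof -
  assume fs: "full_support \<pi>"
  let ?p = "dg_step P r \<gamma> \<eta> \<alpha> \<pi>"
  have pol': "is_policy ?p" using step_full[OF fs] by (simp add: full_support_def)
  have "rv ?p s + \<gamma> * (\<Sum>s1\<in>UNIV. Mt ?p s s1 * Vf P r \<gamma> \<pi> s1) = (\<Sum>a\<in>UNIV. ?p s a * Qf P r \<gamma> \<pi> s a)"
    by (rule Qf_sum[symmetric])
  also have "\<dots> = (\<Sum>a\<in>UNIV. ?p s a * adv P r \<gamma> \<pi> s a + ?p s a * Vf P r \<gamma> \<pi> s)"
    unfolding adv_def by (rule sum.cong) (simp_all add: algebra_simps)
  also have "\<dots> = (\<Sum>a\<in>UNIV. ?p s a * adv P r \<gamma> \<pi> s a) + (\<Sum>a\<in>UNIV. ?p s a) * Vf P r \<gamma> \<pi> s"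
    by (simp add: sum.distrib sum_distrib_right)
  also have "\<dots> = G \<pi> s + Vf P r \<gamma> \<pi> s" using pol' by (simp add: G_def is_policy_def)
  finally show ?thesis .
qed

lemma improve: "full_support \<pi> \<Longrightarrow> Vf P r \<gamma> \<pi> s \<le> Vf P r \<gamma> (dg_step P r \<gamma> \<eta> \<alpha> \<pi>) s"
proof -
  assume fs: "full_support \<pi>"
  have pol': "is_policy (dg_step P r \<gamma> \<eta> \<alpha> \<pi>)" using step_full[OF fs] by (simp add: full_support_def)
  show ?thesis unfolding Vf_gval[of "dg_step P r \<gamma> \<eta> \<alpha> \<pi>"]
  proof (rule gval_sub[OF pol'])
    fix s
    show "Vf P r \<gamma> \<pi> s \<le> rv (dg_step P r \<gamma> \<eta> \<alpha> \<pi>) s + \<gamma> * (\<Sum>s1\<in>UNIV. Mt (dg_step P r \<gamma> \<eta> \<alpha> \<pi>) s s1 * Vf P r \<gamma> \<pi> s1)"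
      unfolding step_Q[OF fs] using G_nonneg[OF fs, of s] by linarith
  qed
qed

lemma Vrho_diff:
  assumes fs: "full_support \<pi>" and rho0: "\<And>s. 0 \<le> \<rho> s" and rho1: "(\<Sum>s\<in>UNIV. \<rho> s) = 1"
  shows "Vrho P r \<gamma> \<rho> (dg_step P r \<gamma> \<eta> \<alpha> \<pi>) - Vrho P r \<gamma> \<rho> \<pi>
     = (\<Sum>s\<in>UNIV. disc_visit P \<gamma> \<rho> (dg_step P r \<gamma> \<eta> \<alpha> \<pi>) s * G \<pi> s) / (1 - \<gamma>)"
proof -
  let ?p = "dg_step P r \<gamma> \<eta> \<alpha> \<pi>"
  have pol': "is_policy ?p" using step_full[OF fs] by (simp add: full_support_def)
  define D where "D s = Vf P r \<gamma> ?p s - Vf P r \<gamma> \<pi> s" for s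
  have D: "D s = gval ?p (G \<pi>) s" for s
  proof (rule gval_unique[OF pol'])
    fix s
    have "D s = (rv ?p s + \<gamma> * (\<Sum>s1\<in>UNIV. Mt ?p s s1 * Vf P r \<gamma> ?p s1))
       - (rv ?p s + \<gamma> * (\<Sum>s1\<in>UNIV. Mt ?p s s1 * Vf P r \<gamma> \<pi> s1) - G \<pi> s)"
      unfolding D_def using Vf_bellman[OF pol', of s] step_Q[OF fs, of s] by linarith
    also have "\<dots> = G \<pi> s + \<gamma> * (\<Sum>s1\<in>UNIV. Mt ?p s s1 * D s1)"
      unfolding D_def by (simp add: right_diff_distrib sum_subtractf algebra_simps)
    finally show "D s = G \<pi> s + \<gamma> * (\<Sum>s1\<in>UNIV. Mt ?p s s1 * D s1)" .
  qed
  have "Vrho P r \<gamma> \<rho> ?p - Vrho P r \<gamma> \<rho> \<pi> = (\<Sum>s\<in>UNIV. \<rho> s * D s)"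
    unfolding Vrho_def D_def by (simp add: right_diff_distrib sum_subtractf)
  also have "\<dots> = (\<Sum>s\<in>UNIV. \<rho> s * gval ?p (G \<pi>) s)" by (simp add: D)
  also have "\<dots> = (\<Sum>s\<in>UNIV. disc_visit P \<gamma> \<rho> ?p s * G \<pi> s) / (1 - \<gamma>)"
    by (rule gval_rho[OF pol' rho0 rho1])
  finally show ?thesis .
qed

lemma iter_full: "full_support (dg_iter P r \<gamma> \<eta> \<alpha> \<theta>0 t)"
  by (induction t) (simp_all add: softmax_full step_full)

end

locale dg_run = dg_loc P r \<gamma> \<eta> \<alpha> for P :: "'s::finite \<Rightarrow> 'a::finite \<Rightarrow> 's \<Rightarrow> real" and r \<gamma> \<eta> \<alpha> +
  fixes \<theta>0 :: "'s \<Rightarrow> 'a \<Rightarrow> real" and \<rho> :: "'s \<Rightarrow> real" and \<pi>s :: "'s \<Rightarrow> 'a \<Rightarrow> real" and dmin :: real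
  assumes rho0: "\<And>s. 0 \<le> \<rho> s" and rho1: "(\<Sum>s\<in>UNIV. \<rho> s) = 1"
    and opt: "optimal_policy P r \<gamma> \<pi>s"
    and uniq: "\<And>\<pi>. optimal_policy P r \<gamma> \<pi> \<Longrightarrow> \<pi> = \<pi>s"
    and dmin_pos: "0 < dmin"
    and reach: "\<And>\<pi> s. full_support \<pi> \<Longrightarrow> dmin \<le> disc_visit P \<gamma> \<rho> \<pi> s"
begin

abbreviation pol where "pol t \<equiv> dg_iter P r \<gamma> \<eta> \<alpha> \<theta>0 t"

definition L :: "'s \<Rightarrow> real" where "L s = (SUP t. Vf P r \<gamma> (pol t) s)"

definition Uinf :: "'s \<Rightarrow> 'a \<Rightarrow> real" where
  "Uinf s a = r s a + \<gamma> * (\<Sum>s'\<in>UNIV. P s a s' * L s') - L s"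

definition trm :: "nat \<Rightarrow> 's \<Rightarrow> 'a \<Rightarrow> real" where
  "trm t s b = pol t s b * ((E (pol t) s b - 1) * adv P r \<gamma> (pol t) s b)"

lemma pol_full: "full_support (pol t)" by (rule iter_full)
lemma pol_pol: "is_policy (pol t)" using pol_full by (simp add: full_support_def)
lemma pol_pos: "0 < pol t s a" using pol_full by (simp add: full_support_def)
lemma pol_le1: "pol t s a \<le> 1"
  using member_le_sum[of a UNIV "pol t s"] pol_pol by (simp add: is_policy_def)
lemma pol_Suc: "pol (Suc t) s a = pol t s a * E (pol t) s a / Z (pol t) s"
  by (simp add: step_eq)

lemma pis_pol: "is_policy \<pi>s" using opt by (simp add: optimal_policy_def)

lemma V_le_opt: "Vf P r \<gamma> (pol t) s \<le> Vf P r \<gamma> \<pi>s s"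
  using opt pol_pol by (simp add: optimal_policy_def)

lemma V_inc: "incseq (\<lambda>t. Vf P r \<gamma> (pol t) s)"
  by (rule incseq_SucI) (simp add: improve pol_full)

lemma V_lim: "(\<lambda>t. Vf P r \<gamma> (pol t) s) \<longlonglongrightarrow> L s"
  unfolding L_def
  by (rule LIMSEQ_incseq_SUP[OF _ V_inc]) (auto intro: bdd_aboveI2 V_le_opt)

lemma L_le: "L s \<le> Vf P r \<gamma> \<pi>s s"
  by (rule LIMSEQ_le_const2[OF V_lim]) (auto intro: V_le_opt)

lemma Vrho_lim: "(\<lambda>t. Vrho P r \<gamma> \<rho> (pol t)) \<longlonglongrightarrow> (\<Sum>s\<in>UNIV. \<rho> s * L s)"
  unfolding Vrho_def by (intro tendsto_intros V_lim)

lemma G_lim: "(\<lambda>t. G (pol t) s) \<longlonglongrightarrow> 0"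
proof (rule tendsto_sandwich)
  show "eventually (\<lambda>t. 0 \<le> G (pol t) s) sequentially" by (simp add: G_nonneg pol_full)
  show "eventually (\<lambda>t. G (pol t) s \<le> (1 - \<gamma>) / dmin * (Vrho P r \<gamma> \<rho> (pol (Suc t)) - Vrho P r \<gamma> \<rho> (pol t))) sequentially"
  proof (rule always_eventually, rule allI)
    fix t
    have diff: "Vrho P r \<gamma> \<rho> (pol (Suc t)) - Vrho P r \<gamma> \<rho> (pol t)
       = (\<Sum>s\<in>UNIV. disc_visit P \<gamma> \<rho> (pol (Suc t)) s * G (pol t) s) / (1 - \<gamma>)"
      using Vrho_diff[OF pol_full rho0 rho1, of t] by simp
    have "dmin * G (pol t) s \<le> disc_visit P \<gamma> \<rho> (pol (Suc t)) s * G (pol t) s"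
      by (rule mult_right_mono[OF reach[OF pol_full] G_nonneg[OF pol_full]])
    also have "\<dots> \<le> (\<Sum>s\<in>UNIV. disc_visit P \<gamma> \<rho> (pol (Suc t)) s * G (pol t) s)"
    proof (rule member_le_sum)
      fix s' :: 's
      have "dmin \<le> disc_visit P \<gamma> \<rho> (pol (Suc t)) s'" by (rule reach[OF pol_full])
      hence "0 \<le> disc_visit P \<gamma> \<rho> (pol (Suc t)) s'" using dmin_pos by linarith
      thus "0 \<le> disc_visit P \<gamma> \<rho> (pol (Suc t)) s' * G (pol t) s'"
        using G_nonneg[OF pol_full[of t], of s'] by (rule mult_nonneg_nonneg)
    qed auto
    also have "\<dots> = (1 - \<gamma>) * (Vrho P r \<gamma> \<rho> (pol (Suc t)) - Vrho P r \<gamma> \<rho> (pol t))"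
      unfolding diff using g_lt1 by simp
    finally show "G (pol t) s \<le> (1 - \<gamma>) / dmin * (Vrho P r \<gamma> \<rho> (pol (Suc t)) - Vrho P r \<gamma> \<rho> (pol t))"
      using dmin_pos by (simp add: field_simps)
  qed
  have "(\<lambda>t. Vrho P r \<gamma> \<rho> (pol (Suc t)) - Vrho P r \<gamma> \<rho> (pol t)) \<longlonglongrightarrow> (\<Sum>s\<in>UNIV. \<rho> s * L s) - (\<Sum>s\<in>UNIV. \<rho> s * L s)"
    by (intro tendsto_diff Vrho_lim LIMSEQ_Suc)
  hence "(\<lambda>t. (1 - \<gamma>) / dmin * (Vrho P r \<gamma> \<rho> (pol (Suc t)) - Vrho P r \<gamma> \<rho> (pol t))) \<longlonglongrightarrow> (1 - \<gamma>) / dmin * 0"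
    by (intro tendsto_mult tendsto_const) simp
  thus "(\<lambda>t. (1 - \<gamma>) / dmin * (Vrho P r \<gamma> \<rho> (pol (Suc t)) - Vrho P r \<gamma> \<rho> (pol t))) \<longlonglongrightarrow> 0" by simp
qed (rule tendsto_const)

lemma trm_nonneg: "0 \<le> trm t s b"
  unfolding trm_def using pol_pos E_sign by (simp add: less_imp_le)

lemma trm_lim: "(\<lambda>t. trm t s b) \<longlonglongrightarrow> 0"
proof (rule tendsto_sandwich)
  show "eventually (\<lambda>t. 0 \<le> trm t s b) sequentially" by (simp add: trm_nonneg)
  show "eventually (\<lambda>t. trm t s b \<le> exp (\<alpha> * K) * G (pol t) s) sequentially"
  proof (rule always_eventually, rule allI)
    fix t
    have "trm t s b \<le> (\<Sum>c\<in>UNIV. trm t s c)" by (rule member_le_sum) (auto simp: trm_nonneg)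
    also have "\<dots> = Z (pol t) s * G (pol t) s"
      unfolding trm_def G_eq[OF pol_full] using Z_pos[OF pol_full, of t s] by simp
    also have "\<dots> \<le> exp (\<alpha> * K) * G (pol t) s"
      by (rule mult_right_mono[OF Z_le[OF pol_full] G_nonneg[OF pol_full]])
    finally show "trm t s b \<le> exp (\<alpha> * K) * G (pol t) s" .
  qed
  show "(\<lambda>t. exp (\<alpha> * K) * G (pol t) s) \<longlonglongrightarrow> 0"
    using tendsto_mult[OF tendsto_const G_lim, of "exp (\<alpha> * K)"] by simp
qed (rule tendsto_const)

lemma U_lim: "(\<lambda>t. adv P r \<gamma> (pol t) s a) \<longlonglongrightarrow> Uinf s a"
  unfolding adv_def Qf_def Uinf_def by (intro tendsto_intros V_lim)

lemma nlog_nonneg: "0 \<le> - ln (pol t s a)"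
  using pol_pos[of t s a] pol_le1[of t s a] by simp

lemma pos_lim:
  assumes pos: "0 < Uinf s b"
  shows "(\<lambda>t. pol t s b) \<longlonglongrightarrow> 0"
proof -
  define \<delta> where "\<delta> = Uinf s b"
  have dp: "0 < \<delta>" using pos by (simp add: \<delta>_def)
  define c where "c = \<alpha> * (1/2) * (\<delta>/2) * (\<delta>/2)"
  have cp: "0 < c" unfolding c_def using dp alpha_pos by simp
  have ev: "eventually (\<lambda>t. \<delta>/2 < adv P r \<gamma> (pol t) s b) sequentially"
    using order_tendstoD(1)[OF U_lim[of s b], of "\<delta>/2"] dp by (simp add: \<delta>_def)
  show ?thesis
  proof (rule tendsto_sandwich)
    show "eventually (\<lambda>t. 0 \<le> pol t s b) sequentially" by (simp add: pol_pos less_imp_le)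
    show "eventually (\<lambda>t. pol t s b \<le> trm t s b / c) sequentially"
      using ev
    proof eventually_elim
      case (elim t)
      define U where "U = adv P r \<gamma> (pol t) s b"
      define w where "w = dg_weight P r \<gamma> \<eta> (pol t) s b"
      define p where "p = pol t s b"
      have U: "\<delta>/2 < U" using elim by (simp add: U_def)
      have Up: "0 < U" using U dp by linarith
      have pp: "0 < p" by (simp add: p_def pol_pos)
      have "0 \<le> U * (- ln p) / \<eta>" using Up eta_pos nlog_nonneg[of t s b]
        unfolding p_def by (intro divide_nonneg_pos mult_nonneg_nonneg) auto
      hence wh: "1/2 \<le> w" unfolding w_def dg_weight_def U_def p_def by (rule sig_half)
      have E1: "\<alpha> * w * U \<le> E (pol t) s b - 1"
        unfolding E_def w_def U_def using exp_ge_add_one_self[of "\<alpha> * dg_weight P r \<gamma> \<eta> (pol t) s b * adv P r \<gamma> (pol t) s b"] by linarith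
      have "c \<le> \<alpha> * (1/2) * U * U"
        unfolding c_def using alpha_pos dp U by (intro mult_mono) auto
      also have "\<dots> \<le> \<alpha> * w * U * U"
        using alpha_pos wh Up by (intro mult_right_mono) auto
      also have "\<dots> \<le> (E (pol t) s b - 1) * U"
        using E1 Up by (intro mult_right_mono) auto
      finally have "c \<le> (E (pol t) s b - 1) * U" .
      hence "p * c \<le> p * ((E (pol t) s b - 1) * U)" using pp by simp
      hence "p * c \<le> trm t s b" unfolding trm_def p_def U_def .
      thus "pol t s b \<le> trm t s b / c" using cp by (simp add: p_def field_simps)
    qed
    show "(\<lambda>t. trm t s b / c) \<longlonglongrightarrow> 0"
      using tendsto_divide[OF trm_lim[of s b] tendsto_const[of c]] cp by simp
  qed (rule tendsto_const)
qed


lemma no_dec_to_zero: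
  fixes X :: "nat \<Rightarrow> real"
  assumes ev: "eventually (\<lambda>n. X n \<le> X (Suc n)) sequentially" and pos: "\<And>n. 0 < X n" and lim: "X \<longlonglongrightarrow> 0"
  shows False
proof -
  obtain N where N: "\<And>n. n \<ge> N \<Longrightarrow> X n \<le> X (Suc n)" using ev by (auto simp: eventually_sequentially)
  have ge: "X N \<le> X n" if "n \<ge> N" for n
    using that
  proof (induction n rule: dec_induct)
    case base then show ?case by simp
  next
    case (step n) then show ?case using N[of n] by linarith
  qed
  have "X N \<le> 0" by (rule LIMSEQ_le_const[OF lim]) (use ge in blast)
  thus False using pos[of N] by simp
qed

lemma neg_lim:
  assumes neg: "Uinf s b < 0"
  shows "(\<lambda>t. pol t s b) \<longlonglongrightarrow> 0"
proof (rule order_tendstoI)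
  fix a :: real assume "a < 0"
  thus "eventually (\<lambda>t. a < pol t s b) sequentially"
    using pol_pos[of _ s b] by (auto intro: always_eventually less_trans)
next
  fix \<epsilon> :: real assume ep: "0 < \<epsilon>"
  define e where "e = min \<epsilon> 1"
  have e0: "0 < e" and e1: "e \<le> 1" and ee: "e \<le> \<epsilon>" using ep by (auto simp: e_def)
  define \<delta> where "\<delta> = - Uinf s b"
  have dp: "0 < \<delta>" using neg by (simp add: \<delta>_def)
  define c where "c = sigmoid (- K * (- ln e) / \<eta>)"
  have cp: "0 < c" unfolding c_def by (rule sig_pos)
  define q where "q = 1 - exp (- (\<alpha> * c * (\<delta>/2)))"
  have qp: "0 < q" unfolding q_def using alpha_pos cp dp by simp
  define bnd where "bnd = e * q * (\<delta>/2)"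
  have bp: "0 < bnd" unfolding bnd_def using e0 qp dp by simp
  have ev1: "eventually (\<lambda>t. adv P r \<gamma> (pol t) s b < - \<delta>/2) sequentially"
    using order_tendstoD(2)[OF U_lim[of s b], of "-\<delta>/2"] dp by (simp add: \<delta>_def)
  have ev2: "eventually (\<lambda>t. trm t s b < bnd) sequentially"
    using order_tendstoD(2)[OF trm_lim[of s b] bp] .
  have "eventually (\<lambda>t. pol t s b < e) sequentially"
    using ev1 ev2
  proof eventually_elim
    case (elim t)
    define U where "U = adv P r \<gamma> (pol t) s b"
    define w where "w = dg_weight P r \<gamma> \<eta> (pol t) s b"
    define p where "p = pol t s b"
    have U: "U < - \<delta>/2" using elim by (simp add: U_def)
    have Un: "U < 0" using U dp by linarith
    have UK: "- K \<le> U" using adv_abs[OF pol_pol, of t s b] by (simp add: U_def)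
    have pp: "0 < p" by (simp add: p_def pol_pos)
    show "p < e" unfolding p_def[symmetric]
    proof (rule ccontr)
      assume "\<not> p < e"
      hence pe: "e \<le> p" by simp
      have l0: "0 \<le> - ln p" using nlog_nonneg[of t s b] by (simp add: p_def)
      have l1: "- ln p \<le> - ln e" using pe e0 by simp
      have "U * (- ln p) \<ge> - K * (- ln p)" using UK l0 by (rule mult_right_mono)
      moreover have "- K * (- ln p) \<ge> - K * (- ln e)" using l1 K_pos by simp
      ultimately have "- K * (- ln e) \<le> U * (- ln p)" by linarith
      hence "- K * (- ln e) / \<eta> \<le> U * (- ln p) / \<eta>" using eta_pos by (intro divide_right_mono) auto
      hence wc: "c \<le> w" unfolding c_def w_def dg_weight_def U_def p_def by (rule sig_mono)
      have "w * U \<le> c * U" using mult_right_mono_neg[OF wc] Un by simp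
      also have "c * U \<le> c * (- \<delta>/2)" using mult_left_mono[OF less_imp_le[OF U] less_imp_le[OF cp]] by simp
      finally have wU: "w * U \<le> c * (- \<delta>/2)" .
      have "\<alpha> * (w * U) \<le> \<alpha> * (c * (- \<delta>/2))" by (rule mult_left_mono[OF wU]) (use alpha_pos in linarith)
      moreover have "\<alpha> * (c * (- \<delta>/2)) = - (\<alpha> * c * (\<delta>/2))" by (simp add: algebra_simps)
      moreover have "\<alpha> * w * U = \<alpha> * (w * U)" by (simp add: mult.assoc)
      ultimately have "\<alpha> * w * U \<le> - (\<alpha> * c * (\<delta>/2))" by linarith
      hence "E (pol t) s b \<le> exp (- (\<alpha> * c * (\<delta>/2)))" unfolding E_def w_def U_def by simp
      hence Eq: "q \<le> 1 - E (pol t) s b" unfolding q_def by simp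
      have "bnd \<le> p * q * (\<delta>/2)" unfolding bnd_def using pe qp dp by (intro mult_right_mono) auto
      also have "\<dots> \<le> p * (1 - E (pol t) s b) * (- U)"
        using pp qp Eq U dp by (intro mult_mono mult_left_mono) auto
      also have "\<dots> = trm t s b" unfolding trm_def p_def U_def by (simp add: algebra_simps)
      finally show False using elim by simp
    qed
  qed
  thus "eventually (\<lambda>t. pol t s b < \<epsilon>) sequentially"
    by eventually_elim (use ee in linarith)
qed


lemma Qgen_sum: "(\<Sum>a\<in>UNIV. \<pi> s a * (r s a + \<gamma> * (\<Sum>s1\<in>UNIV. P s a s1 * W s1))) = rv \<pi> s + \<gamma> * (\<Sum>s1\<in>UNIV. Mt \<pi> s s1 * W s1)"
proof -
  have A: "(\<Sum>a\<in>UNIV. \<pi> s a * (r s a + \<gamma> * (\<Sum>s1\<in>UNIV. P s a s1 * W s1))) = (\<Sum>a\<in>UNIV. \<pi> s a * r s a) + \<gamma> * (\<Sum>a\<in>UNIV. \<pi> s a * (\<Sum>s1\<in>UNIV. P s a s1 * W s1))"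
    by (simp add: distrib_left sum.distrib sum_distrib_left mult.left_commute)
  have B: "(\<Sum>a\<in>UNIV. \<pi> s a * (\<Sum>s1\<in>UNIV. P s a s1 * W s1)) = (\<Sum>s1\<in>UNIV. Mt \<pi> s s1 * W s1)"
    unfolding Mt_def by (simp only: sum_distrib_left sum_distrib_right mult.assoc) (rule sum.swap)
  show ?thesis unfolding A B rv_def ..
qed

lemma Uinf_nonpos: "Uinf s a \<le> 0"
proof (rule ccontr)
  assume na: "\<not> Uinf s a \<le> 0"
  have "Max (range (Uinf s)) \<in> range (Uinf s)" by (rule Max_in) auto
  then obtain a0 where a0: "Uinf s a0 = Max (range (Uinf s))" by (metis rangeE)
  have amax: "Uinf s x \<le> Uinf s a0" for x using a0 by simp
  define \<delta> where "\<delta> = Uinf s a0"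
  have dp: "0 < \<delta>" using amax[of a] na by (simp add: \<delta>_def)
  define e4 where "e4 = exp (\<alpha> * \<delta> / 4)"
  define e8 where "e8 = exp (\<alpha> * \<delta> / 8)"
  have gap: "e8 < e4" unfolding e4_def e8_def using alpha_pos dp by simp
  have cardp: "0 < real CARD('a)" by simp
  define \<epsilon> where "\<epsilon> = (e4 - e8) / (2 * real CARD('a) * exp (\<alpha> * K))"
  have epos: "0 < \<epsilon>" unfolding \<epsilon>_def using gap cardp by (intro divide_pos_pos) auto
  have ceq: "real CARD('a) * (\<epsilon> * exp (\<alpha> * K)) = (e4 - e8) / 2"
    unfolding \<epsilon>_def using cardp by (simp add: field_simps)
  have ev1: "eventually (\<lambda>t. \<delta>/2 < adv P r \<gamma> (pol t) s a0) sequentially"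
    using order_tendstoD(1)[OF U_lim[of s a0], of "\<delta>/2"] dp by (simp add: \<delta>_def)
  have ev2: "eventually (\<lambda>t. \<forall>b. Uinf s b \<le> 0 \<longrightarrow> adv P r \<gamma> (pol t) s b < \<delta>/8) sequentially"
  proof (rule eventually_all_finite)
    fix b
    show "eventually (\<lambda>t. Uinf s b \<le> 0 \<longrightarrow> adv P r \<gamma> (pol t) s b < \<delta>/8) sequentially"
    proof (cases "Uinf s b \<le> 0")
      case True
      hence "Uinf s b < \<delta>/8" using dp by linarith
      from order_tendstoD(2)[OF U_lim[of s b] this] show ?thesis by (rule eventually_mono) simp
    qed simp
  qed
  have ev3: "eventually (\<lambda>t. \<forall>b. 0 < Uinf s b \<longrightarrow> pol t s b < \<epsilon>) sequentially"
  proof (rule eventually_all_finite)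
    fix b
    show "eventually (\<lambda>t. 0 < Uinf s b \<longrightarrow> pol t s b < \<epsilon>) sequentially"
    proof (cases "0 < Uinf s b")
      case True
      from order_tendstoD(2)[OF pos_lim[OF True] epos] show ?thesis by (rule eventually_mono) simp
    qed simp
  qed
  have evm: "eventually (\<lambda>t. pol t s a0 \<le> pol (Suc t) s a0) sequentially"
    using ev1 ev2 ev3
  proof eventually_elim
    case (elim t)
    define U0 where "U0 = adv P r \<gamma> (pol t) s a0"
    define w0 where "w0 = dg_weight P r \<gamma> \<eta> (pol t) s a0"
    have U0: "\<delta>/2 < U0" using elim by (simp add: U0_def)
    have U0p: "0 < U0" using U0 dp by linarith
    have "0 \<le> U0 * (- ln (pol t s a0)) / \<eta>" using U0p eta_pos nlog_nonneg[of t s a0]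
      by (intro divide_nonneg_pos mult_nonneg_nonneg) auto
    hence wh: "1/2 \<le> w0" unfolding w0_def dg_weight_def U0_def by (rule sig_half)
    have "(1/2) * (\<delta>/2) \<le> w0 * U0" using wh U0 dp by (intro mult_mono) auto
    hence "\<alpha> * ((1/2) * (\<delta>/2)) \<le> \<alpha> * (w0 * U0)" using alpha_pos by (intro mult_left_mono) auto
    hence "\<alpha> * \<delta> / 4 \<le> \<alpha> * w0 * U0" by (simp add: mult.assoc)
    hence E0: "e4 \<le> E (pol t) s a0" unfolding e4_def E_def w0_def U0_def by simp
    have each: "pol t s b * E (pol t) s b \<le> \<epsilon> * exp (\<alpha> * K) + pol t s b * e8" for b
    proof (cases "0 < Uinf s b")
      case True
      hence pb: "pol t s b < \<epsilon>" using elim by blast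
      have "pol t s b * E (pol t) s b \<le> \<epsilon> * exp (\<alpha> * K)"
        using pb E_le[OF pol_pol, of t s b] pol_pos[of t s b] E_pos[of "pol t" s b] by (intro mult_mono) auto
      moreover have "0 \<le> pol t s b * e8" using pol_pos[of t s b] by (simp add: e8_def)
      ultimately show ?thesis by linarith
    next
      case False
      hence Ub: "adv P r \<gamma> (pol t) s b < \<delta>/8" using elim by auto
      have "dg_weight P r \<gamma> \<eta> (pol t) s b * adv P r \<gamma> (pol t) s b \<le> \<delta>/8"
      proof (cases "0 \<le> adv P r \<gamma> (pol t) s b")
        case True thus ?thesis using wU_le[of "pol t" s b] Ub by simp
      next
        case False thus ?thesis using w_pos[of "pol t" s b] dp
          mult_pos_neg[of "dg_weight P r \<gamma> \<eta> (pol t) s b" "adv P r \<gamma> (pol t) s b"] by simp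
      qed
      hence "\<alpha> * (dg_weight P r \<gamma> \<eta> (pol t) s b * adv P r \<gamma> (pol t) s b) \<le> \<alpha> * (\<delta>/8)"
        using alpha_pos by (intro mult_left_mono) auto
      hence "E (pol t) s b \<le> e8" unfolding E_def e8_def by (simp add: mult.assoc)
      hence "pol t s b * E (pol t) s b \<le> pol t s b * e8" using pol_pos[of t s b] by simp
      moreover have "0 \<le> \<epsilon> * exp (\<alpha> * K)" using epos by simp
      ultimately show ?thesis by linarith
    qed
    have "Z (pol t) s \<le> (\<Sum>b\<in>UNIV. \<epsilon> * exp (\<alpha> * K) + pol t s b * e8)"
      unfolding Z_def by (rule sum_mono) (rule each)
    also have "\<dots> = real CARD('a) * (\<epsilon> * exp (\<alpha> * K)) + e8"
      using pol_pol[of t] by (simp add: sum.distrib sum_distrib_right[symmetric] is_policy_def)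
    also have "\<dots> < e4" unfolding ceq using gap by (simp add: field_simps)
    finally have "Z (pol t) s \<le> E (pol t) s a0" using E0 by simp
    hence "pol t s a0 * Z (pol t) s \<le> pol t s a0 * E (pol t) s a0" using pol_pos[of t s a0] by simp
    thus "pol t s a0 \<le> pol (Suc t) s a0"
      unfolding pol_Suc using Z_pos[OF pol_full, of t s] by (simp add: le_divide_eq)
  qed
  have lim0: "(\<lambda>t. pol t s a0) \<longlonglongrightarrow> 0" by (rule pos_lim) (use dp in \<open>simp add: \<delta>_def\<close>)
  show False by (rule no_dec_to_zero[of "\<lambda>t. pol t s a0", OF evm _ lim0]) (rule pol_pos)
qed

lemma L_eq: "L s = Vf P r \<gamma> \<pi>s s"
proof -
  have le: "r x a + \<gamma> * (\<Sum>s'\<in>UNIV. P x a s' * L s') \<le> L x" for x a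
    using Uinf_nonpos[of x a] by (simp add: Uinf_def)
  have "gval \<pi>s (rv \<pi>s) s \<le> L s"
  proof (rule gval_super[OF pis_pol])
    fix x
    have "rv \<pi>s x + \<gamma> * (\<Sum>s1\<in>UNIV. Mt \<pi>s x s1 * L s1) = (\<Sum>a\<in>UNIV. \<pi>s x a * (r x a + \<gamma> * (\<Sum>s1\<in>UNIV. P x a s1 * L s1)))"
      by (rule Qgen_sum[symmetric])
    also have "\<dots> \<le> (\<Sum>a\<in>UNIV. \<pi>s x a * L x)"
      using pis_pol le by (intro sum_mono mult_left_mono) (auto simp: is_policy_def)
    also have "\<dots> = L x" using pis_pol by (simp add: sum_distrib_right[symmetric] is_policy_def)
    finally show "rv \<pi>s x + \<gamma> * (\<Sum>s1\<in>UNIV. Mt \<pi>s x s1 * L s1) \<le> L x" .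
  qed
  thus ?thesis using L_le[of s] by (simp add: Vf_gval)
qed

lemma L_fun: "L = Vf P r \<gamma> \<pi>s" using L_eq by (rule ext)

lemma Uinf_adv: "Uinf s a = adv P r \<gamma> \<pi>s s a"
  unfolding Uinf_def adv_def Qf_def L_fun ..

lemma delta_sum_a: "(\<Sum>a\<in>UNIV. (if a = (b::'a) then 1 else 0) * (h a::real)) = h b"
proof -
  have "(\<lambda>a. (if a = b then 1 else 0) * h a) = (\<lambda>a. if a = b then h a else 0)" by auto
  thus ?thesis unfolding \<open>(\<lambda>a. (if a = b then 1 else 0) * h a) = (\<lambda>a. if a = b then h a else 0)\<close> by simp
qed

lemma zero_case:
  assumes z: "Uinf s b = 0"
  shows "\<pi>s s a = (if a = b then 1 else 0)"
proof -
  define \<pi>' where "\<pi>' x c = (if x = s then (if c = b then 1 else 0) else \<pi>s x c)" for x c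
  have s1: "(\<Sum>c\<in>UNIV. \<pi>' x c) = 1" for x
  proof (cases "x = s")
    case True thus ?thesis by (simp add: \<pi>'_def)
  next
    case False thus ?thesis using pis_pol by (simp add: \<pi>'_def is_policy_def)
  qed
  have nn: "0 \<le> \<pi>' x c" for x c using pis_pol by (simp add: \<pi>'_def is_policy_def)
  have pol': "is_policy \<pi>'"
    unfolding is_policy_def using nn s1 by blast
  have fx: "Vf P r \<gamma> \<pi>s x = rv \<pi>' x + \<gamma> * (\<Sum>x1\<in>UNIV. Mt \<pi>' x x1 * Vf P r \<gamma> \<pi>s x1)" for x
  proof -
    have "rv \<pi>' x + \<gamma> * (\<Sum>x1\<in>UNIV. Mt \<pi>' x x1 * Vf P r \<gamma> \<pi>s x1) = (\<Sum>c\<in>UNIV. \<pi>' x c * Qf P r \<gamma> \<pi>s x c)"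
      by (rule Qf_sum[symmetric])
    also have "\<dots> = Vf P r \<gamma> \<pi>s x"
    proof (cases "x = s")
      case True
      have "(\<Sum>c\<in>UNIV. \<pi>' x c * Qf P r \<gamma> \<pi>s x c) = Qf P r \<gamma> \<pi>s s b"
        unfolding \<pi>'_def using True delta_sum_a[of b "Qf P r \<gamma> \<pi>s s"] by simp
      also have "\<dots> = Vf P r \<gamma> \<pi>s s" using z unfolding Uinf_adv adv_def by simp
      finally show ?thesis using True by simp
    next
      case False
      thus ?thesis unfolding \<pi>'_def using Vf_Q[OF pis_pol, of x] by simp
    qed
    finally show ?thesis by simp
  qed
  have eqV: "Vf P r \<gamma> \<pi>s x = Vf P r \<gamma> \<pi>' x" for x
    unfolding Vf_gval[of \<pi>'] by (rule gval_unique[OF pol']) (rule fx)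
  have "optimal_policy P r \<gamma> \<pi>'"
    unfolding optimal_policy_def using pol' opt eqV by (simp add: optimal_policy_def)
  hence "\<pi>' = \<pi>s" by (rule uniq)
  hence "\<pi>s s a = \<pi>' s a" by simp
  thus ?thesis by (simp add: \<pi>'_def)
qed

lemma Vrho_conv: "(\<lambda>t. Vrho P r \<gamma> \<rho> (pol t)) \<longlonglongrightarrow> Vrho P r \<gamma> \<rho> \<pi>s"
  using Vrho_lim unfolding L_fun Vrho_def .

lemma pol_conv: "(\<lambda>t. pol t s a) \<longlonglongrightarrow> \<pi>s s a"
proof (cases "\<exists>b. Uinf s b = 0")
  case True
  then obtain b where b: "Uinf s b = 0" by blast
  have pb: "\<pi>s s c = (if c = b then 1 else 0)" for c by (rule zero_case[OF b])
  have oth: "(\<lambda>t. pol t s c) \<longlonglongrightarrow> 0" if "c \<noteq> b" for c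
  proof -
    have "Uinf s c \<noteq> 0"
    proof
      assume "Uinf s c = 0"
      from zero_case[OF this, of c] pb[of c] that show False by simp
    qed
    hence "Uinf s c < 0" using Uinf_nonpos[of s c] by linarith
    thus ?thesis by (rule neg_lim)
  qed
  show ?thesis
  proof (cases "a = b")
    case False
    thus ?thesis using oth[OF False] pb[of a] by simp
  next
    case True
    have eq: "pol t s b = 1 - (\<Sum>c\<in>UNIV - {b}. pol t s c)" for t
      using sum.remove[of UNIV b "pol t s"] pol_pol[of t] by (simp add: is_policy_def)
    have "(\<lambda>t. 1 - (\<Sum>c\<in>UNIV - {b}. pol t s c)) \<longlonglongrightarrow> 1 - (\<Sum>c\<in>UNIV - {b}. (0::real))"
      by (intro tendsto_diff tendsto_const tendsto_sum oth) auto
    thus ?thesis using True pb[of b] unfolding eq[symmetric] by simp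
  qed
next
  case False
  hence neg: "Uinf s c < 0" for c using Uinf_nonpos[of s c] by (metis order_le_less)
  have "(\<lambda>t. \<Sum>c\<in>UNIV. pol t s c) \<longlonglongrightarrow> (\<Sum>c\<in>UNIV. (0::real))"
    using tendsto_sum[of UNIV "\<lambda>c t. pol t s c" "\<lambda>c. 0" sequentially] neg_lim[OF neg] by auto
  moreover have "(\<lambda>t. \<Sum>c\<in>UNIV. pol t s c) = (\<lambda>t. 1)" using pol_pol by (simp add: is_policy_def)
  ultimately have "(\<lambda>t. 1::real) \<longlonglongrightarrow> 0" by simp
  hence "(1::real) = 0" using LIMSEQ_unique tendsto_const by blast
  thus ?thesis by simp
qed

end


theorem theorem8:
  fixes P :: "'s::finite \<Rightarrow> 'a::finite \<Rightarrow> 's \<Rightarrow> real"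
    and r :: "'s \<Rightarrow> 'a \<Rightarrow> real" and \<gamma> :: real and \<rho> :: "'s \<Rightarrow> real"
    and \<pi>star :: "'s \<Rightarrow> 'a \<Rightarrow> real" and \<eta> :: real
  assumes mdp: "is_mdp P r \<gamma> \<rho>"
    and opt: "optimal_policy P r \<gamma> \<pi>star"
    and unique: "\<And>\<pi>. optimal_policy P r \<gamma> \<pi> \<Longrightarrow> \<pi> = \<pi>star"
    and reach: "\<exists>dmin>0. \<forall>\<pi>. full_support \<pi> \<longrightarrow> (\<forall>s. dmin \<le> disc_visit P \<gamma> \<rho> \<pi> s)"
    and eta: "0 < \<eta>"
  shows "\<exists>\<alpha>0>0. \<forall>\<alpha>. 0 < \<alpha> \<and> \<alpha> < \<alpha>0 \<longrightarrow> (\<forall>\<theta>0.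
           (\<lambda>t. Vrho P r \<gamma> \<rho> (dg_iter P r \<gamma> \<eta> \<alpha> \<theta>0 t)) \<longlonglongrightarrow> Vrho P r \<gamma> \<rho> \<pi>star \<and>
           (\<forall>s a. (\<lambda>t. dg_iter P r \<gamma> \<eta> \<alpha> \<theta>0 t s a) \<longlonglongrightarrow> \<pi>star s a))"
proof -
  obtain dmin where dpos: "0 < dmin" and dm: "\<And>\<pi> s. full_support \<pi> \<Longrightarrow> dmin \<le> disc_visit P \<gamma> \<rho> \<pi> s"
    using reach by blast
  have main: "\<forall>\<alpha>. 0 < \<alpha> \<and> \<alpha> < 1 \<longrightarrow> (\<forall>\<theta>0.
           (\<lambda>t. Vrho P r \<gamma> \<rho> (dg_iter P r \<gamma> \<eta> \<alpha> \<theta>0 t)) \<longlonglongrightarrow> Vrho P r \<gamma> \<rho> \<pi>star \<and>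
           (\<forall>s a. (\<lambda>t. dg_iter P r \<gamma> \<eta> \<alpha> \<theta>0 t s a) \<longlonglongrightarrow> \<pi>star s a))"
  proof (intro allI impI)
    fix \<alpha> :: real and \<theta>0 :: "'s \<Rightarrow> 'a \<Rightarrow> real"
    assume a: "0 < \<alpha> \<and> \<alpha> < 1"
    interpret dg_run P r \<gamma> \<eta> \<alpha> \<theta>0 \<rho> \<pi>star dmin
    proof unfold_locales
      show "\<And>s a s'. 0 \<le> P s a s'" using mdp by (simp add: is_mdp_def)
      show "\<And>s a. (\<Sum>s'\<in>UNIV. P s a s') = 1" using mdp by (simp add: is_mdp_def)
      show "\<And>s a. 0 \<le> r s a" using mdp by (simp add: is_mdp_def)
      show "\<And>s a. r s a \<le> 1" using mdp by (simp add: is_mdp_def)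
      show "0 \<le> \<gamma>" using mdp by (simp add: is_mdp_def)
      show "\<gamma> < 1" using mdp by (simp add: is_mdp_def)
      show "0 < \<eta>" by (rule eta)
      show "0 < \<alpha>" using a by simp
      show "\<And>s. 0 \<le> \<rho> s" using mdp by (simp add: is_mdp_def)
      show "(\<Sum>s\<in>UNIV. \<rho> s) = 1" using mdp by (simp add: is_mdp_def)
      show "optimal_policy P r \<gamma> \<pi>star" by (rule opt)
      show "\<And>\<pi>. optimal_policy P r \<gamma> \<pi> \<Longrightarrow> \<pi> = \<pi>star" by (rule unique)
      show "0 < dmin" by (rule dpos)
      show "\<And>\<pi> s. full_support \<pi> \<Longrightarrow> dmin \<le> disc_visit P \<gamma> \<rho> \<pi> s" by (rule dm)
    qed
    show "(\<lambda>t. Vrho P r \<gamma> \<rho> (dg_iter P r \<gamma> \<eta> \<alpha> \<theta>0 t)) \<longlonglongrightarrow> Vrho P r \<gamma> \<rho> \<pi>star \<and>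
           (\<forall>s a. (\<lambda>t. dg_iter P r \<gamma> \<eta> \<alpha> \<theta>0 t s a) \<longlonglongrightarrow> \<pi>star s a)"
      using Vrho_conv pol_conv by blast
  qed
  have one: "(0::real) < 1" by simp
  show ?thesis using main one by blast
qed

end
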